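(* Let $X=\ell^p(\mathbb{N})$ with $1\leq p<\infty$, or $X=c_0(\mathbb{N})$, and let $w=\{w_j\}_{j\in\mathbb{N}}$ be a bounded sequence of non-zero scalars. Let $B_w\colon X\to X$ be the unilateral backward weighted shift $(x_1,x_2,\dots)\mapsto(w_2x_2,w_3x_3,\dots)$. Then the following are equivalent: (1) $\sup_{k,n\in\mathbb{N}}\prod_{j=k+1}^{n+k+1}|w_j|=\infty$; (2) there exists a Li-Yorke scrambled pair for $B_w$; (3) $B_w$ is Li-Yorke chaotic; (4) $B_w$ admits a dense irregular manifold; (5) $B_w$ is densely uniformly Li-Yorke chaotic.
   Context: A pair $(x,y)\in X\times X$ is Li-Yorke scrambled for $T$ if $\liminf_n\|T^nx-T^ny\|=0$ and $\limsup_n\|T^nx-T^ny\|>0$; $T$ is Li-Yorke chaotic if there is an uncountable set $S\subset X$ every pair of distinct points of which is Li-Yorke scrambled. A vector $x$ is irregular if $\liminf_n\|T^nx\|=0$ and $\limsup_n\|T^nx\|=\infty$; an irregular manifold is a vector subspace all of whose non-zero vectors are irregular. A subset $S\subset X$ with at least two points is uniformly Li-Yorke scrambled for $T$ if there exist sequences $\{p_n\}$, $\{q_n\}$ in $\mathbb{N}$ such that for all distinct $x,y\in S$: $\lim_n\|T^{p_n}x-T^{p_n}y\|=0$ and $\lim_n\|T^{q_n}x-T^{q_n}y\|=\infty$; $T$ is densely uniformly Li-Yorke chaotic if there is a dense, uncountable such set. *)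

theory Defs
  imports "HOL-Analysis.Analysis"
begin

text \<open>Sequence spaces over a scalar field 'a (real or complex). Sequences are indexed
  from 0: the coordinate x n corresponds to the paper's x_(n+1).\<close>

definition lp_seq :: "real \<Rightarrow> (nat \<Rightarrow> 'a::real_normed_field) set" where
  "lp_seq p = {x. summable (\<lambda>n. norm (x n) powr p)}"

definition lp_norm :: "real \<Rightarrow> (nat \<Rightarrow> 'a::real_normed_field) \<Rightarrow> real" where
  "lp_norm p x = (\<Sum>n. norm (x n) powr p) powr (1 / p)"

definition c0_seq :: "(nat \<Rightarrow> 'a::real_normed_field) set" where
  "c0_seq = {x. x \<longlonglongrightarrow> 0}"

definition c0_norm :: "(nat \<Rightarrow> 'a::real_normed_field) \<Rightarrow> real" where
  "c0_norm x = (SUP n. norm (x n))"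

text \<open>Unilateral backward weighted shift, with weights w indexed as in the paper
  (w j = w_j for j \<ge> 1; w 0 is unused). In paper indexing
  (B_w x)_i = w_(i+1) x_(i+1); in 0-based coordinates (B_w x) m = w (m+2) * x (m+1).\<close>

definition bw_shift :: "(nat \<Rightarrow> 'a::real_normed_field) \<Rightarrow> (nat \<Rightarrow> 'a) \<Rightarrow> (nat \<Rightarrow> 'a)" where
  "bw_shift w x = (\<lambda>m. w (m + 2) * x (m + 1))"

definition seq_diff :: "(nat \<Rightarrow> 'a::real_normed_field) \<Rightarrow> (nat \<Rightarrow> 'a) \<Rightarrow> (nat \<Rightarrow> 'a)" where
  "seq_diff x y = (\<lambda>n. x n - y n)"

definition li_yorke_pair ::
  "((nat \<Rightarrow> 'a::real_normed_field) \<Rightarrow> real) \<Rightarrow> ((nat \<Rightarrow> 'a) \<Rightarrow> (nat \<Rightarrow> 'a)) \<Rightarrow> (nat \<Rightarrow> 'a) \<Rightarrow> (nat \<Rightarrow> 'a) \<Rightarrow> bool" where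
  "li_yorke_pair N T x y \<longleftrightarrow>
     liminf (\<lambda>n. ereal (N (seq_diff ((T ^^ n) x) ((T ^^ n) y)))) = 0 \<and>
     limsup (\<lambda>n. ereal (N (seq_diff ((T ^^ n) x) ((T ^^ n) y)))) > 0"

definition li_yorke_chaotic ::
  "(nat \<Rightarrow> 'a::real_normed_field) set \<Rightarrow> ((nat \<Rightarrow> 'a) \<Rightarrow> real) \<Rightarrow> ((nat \<Rightarrow> 'a) \<Rightarrow> (nat \<Rightarrow> 'a)) \<Rightarrow> bool" where
  "li_yorke_chaotic X N T \<longleftrightarrow>
     (\<exists>S. S \<subseteq> X \<and> uncountable S \<and>
          (\<forall>x\<in>S. \<forall>y\<in>S. x \<noteq> y \<longrightarrow> li_yorke_pair N T x y))"

definition irregular_vec ::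
  "((nat \<Rightarrow> 'a::real_normed_field) \<Rightarrow> real) \<Rightarrow> ((nat \<Rightarrow> 'a) \<Rightarrow> (nat \<Rightarrow> 'a)) \<Rightarrow> (nat \<Rightarrow> 'a) \<Rightarrow> bool" where
  "irregular_vec N T x \<longleftrightarrow>
     liminf (\<lambda>n. ereal (N ((T ^^ n) x))) = 0 \<and>
     limsup (\<lambda>n. ereal (N ((T ^^ n) x))) = \<infinity>"

definition seq_subspace :: "(nat \<Rightarrow> 'a::real_normed_field) set \<Rightarrow> bool" where
  "seq_subspace M \<longleftrightarrow> (\<lambda>n. 0) \<in> M \<and>
     (\<forall>x\<in>M. \<forall>y\<in>M. (\<lambda>n. x n + y n) \<in> M) \<and>
     (\<forall>c::'a. \<forall>x\<in>M. (\<lambda>n. c * x n) \<in> M)"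

definition dense_in_space ::
  "(nat \<Rightarrow> 'a::real_normed_field) set \<Rightarrow> ((nat \<Rightarrow> 'a) \<Rightarrow> real) \<Rightarrow> (nat \<Rightarrow> 'a) set \<Rightarrow> bool" where
  "dense_in_space X N D \<longleftrightarrow> D \<subseteq> X \<and>
     (\<forall>x\<in>X. \<forall>e>0. \<exists>d\<in>D. N (seq_diff x d) < e)"

definition dense_irregular_manifold ::
  "(nat \<Rightarrow> 'a::real_normed_field) set \<Rightarrow> ((nat \<Rightarrow> 'a) \<Rightarrow> real) \<Rightarrow> ((nat \<Rightarrow> 'a) \<Rightarrow> (nat \<Rightarrow> 'a)) \<Rightarrow> bool" where
  "dense_irregular_manifold X N T \<longleftrightarrow>
     (\<exists>M. seq_subspace M \<and> dense_in_space X N M \<and>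
          (\<forall>x\<in>M. x \<noteq> (\<lambda>n. 0) \<longrightarrow> irregular_vec N T x))"

definition uniformly_li_yorke_scrambled ::
  "(nat \<Rightarrow> 'a::real_normed_field) set \<Rightarrow> ((nat \<Rightarrow> 'a) \<Rightarrow> real) \<Rightarrow> ((nat \<Rightarrow> 'a) \<Rightarrow> (nat \<Rightarrow> 'a)) \<Rightarrow> (nat \<Rightarrow> 'a) set \<Rightarrow> bool" where
  "uniformly_li_yorke_scrambled X N T S \<longleftrightarrow> S \<subseteq> X \<and> (\<exists>x\<in>S. \<exists>y\<in>S. x \<noteq> y) \<and>
     (\<exists>p q :: nat \<Rightarrow> nat. \<forall>x\<in>S. \<forall>y\<in>S. x \<noteq> y \<longrightarrow>
        (\<lambda>n. N (seq_diff ((T ^^ p n) x) ((T ^^ p n) y))) \<longlonglongrightarrow> 0 \<and>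
        filterlim (\<lambda>n. N (seq_diff ((T ^^ q n) x) ((T ^^ q n) y))) at_top sequentially)"

definition densely_uniformly_li_yorke_chaotic ::
  "(nat \<Rightarrow> 'a::real_normed_field) set \<Rightarrow> ((nat \<Rightarrow> 'a) \<Rightarrow> real) \<Rightarrow> ((nat \<Rightarrow> 'a) \<Rightarrow> (nat \<Rightarrow> 'a)) \<Rightarrow> bool" where
  "densely_uniformly_li_yorke_chaotic X N T \<longleftrightarrow>
     (\<exists>S. dense_in_space X N S \<and> uncountable S \<and> uniformly_li_yorke_scrambled X N T S)"

end

theory Submission
  imports Defs
begin


definition sp :: "(nat \<Rightarrow> nat) \<Rightarrow> (nat \<Rightarrow> 'a::real_normed_field) \<Rightarrow> nat \<Rightarrow> 'a" where
  "sp j v i = (if i \<in> range j then v (inv j i) else 0)"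

lemma sp_at: "strict_mono j \<Longrightarrow> sp j v (j l) = v l"
  unfolding sp_def by (simp add: strict_mono_imp_inj_on)

lemma sp_out: "i \<notin> range j \<Longrightarrow> sp j v i = 0"
  unfolding sp_def by simp

lemma single_le_suminf:
  fixes f :: "nat \<Rightarrow> real"
  assumes "summable f" "\<And>n. 0 \<le> f n" shows "f i \<le> suminf f"
  using sum_le_suminf[OF assms(1), of "{i}"] assms(2) by simp

lemma powr_sum_le2:
  fixes a b r :: real assumes "0 \<le> a" "0 \<le> b" "0 < r"
  shows "(a + b) powr r \<le> 2 powr r * (a powr r + b powr r)"
proof -
  have "(a + b) powr r \<le> (2 * max a b) powr r"
    using assms by (intro powr_mono2) auto
  also have "\<dots> = 2 powr r * (max a b) powr r"
    using assms by (simp add: powr_mult)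
  also have "\<dots> \<le> 2 powr r * (a powr r + b powr r)"
    using assms by (intro mult_left_mono) (auto simp: max_def)
  finally show ?thesis .
qed

locale qnorm =
  fixes X :: "(nat \<Rightarrow> 'a::real_normed_field) set" and N :: "(nat \<Rightarrow> 'a) \<Rightarrow> real"
  assumes A1: "x \<in> X \<Longrightarrow> norm (x i) \<le> N x"
    and A2: "y \<in> X \<Longrightarrow> 0 \<le> C \<Longrightarrow> (\<And>i. norm (x i) \<le> C * norm (y (i + n))) \<Longrightarrow> x \<in> X \<and> N x \<le> C * N y"
    and A3: "x \<in> X \<Longrightarrow> y \<in> X \<Longrightarrow> (\<lambda>i. x i + y i) \<in> X \<and> N (\<lambda>i. x i + y i) \<le> 4 * (N x + N y)"
    and A5: "strict_mono j \<Longrightarrow> summable (\<lambda>l. norm (v l)) \<Longrightarrow> sp j v \<in> X \<and> N (sp j v) \<le> (\<Sum>l. norm (v l))"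
    and A6: "x \<in> X \<Longrightarrow> 0 < e \<Longrightarrow> \<exists>L. N (\<lambda>i. if i < L then 0 else x i) < e"

lemma lp_qnorm:
  assumes p: "1 \<le> p"
  shows "qnorm (lp_seq p :: (nat \<Rightarrow> 'a::real_normed_field) set) (lp_norm p)"
proof
  have pp: "0 < p" using p by simp
  fix x :: "nat \<Rightarrow> 'a" and i
  assume x: "x \<in> lp_seq p"
  then have s: "summable (\<lambda>n. norm (x n) powr p)" by (simp add: lp_seq_def)
  have "norm (x i) powr p \<le> (\<Sum>n. norm (x n) powr p)"
    by (rule single_le_suminf[OF s]) simp
  then have "(norm (x i) powr p) powr (1/p) \<le> (\<Sum>n. norm (x n) powr p) powr (1/p)"
    using pp by (intro powr_mono2) auto
  then show "norm (x i) \<le> lp_norm p x"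
    using pp by (simp add: lp_norm_def powr_powr)
next
  have pp: "0 < p" using p by simp
  fix y x :: "nat \<Rightarrow> 'a" and C :: real and n
  assume y: "y \<in> lp_seq p" and C: "0 \<le> C" and le: "\<And>i. norm (x i) \<le> C * norm (y (i + n))"
  have sy: "summable (\<lambda>n. norm (y n) powr p)" using y by (simp add: lp_seq_def)
  have sy': "summable (\<lambda>i. C powr p * norm (y (i + n)) powr p)"
    using summable_ignore_initial_segment[OF sy, of n] by (intro summable_mult)
  have le': "norm (x i) powr p \<le> C powr p * norm (y (i + n)) powr p" for i
  proof -
    have "norm (x i) powr p \<le> (C * norm (y (i + n))) powr p"
      using le[of i] pp by (intro powr_mono2) auto
    also have "\<dots> = C powr p * norm (y (i + n)) powr p" using C by (simp add: powr_mult)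
    finally show ?thesis .
  qed
  have sx: "summable (\<lambda>i. norm (x i) powr p)"
    by (rule summable_comparison_test'[OF sy']) (use le' in auto)
  then show "x \<in> lp_seq p \<and> lp_norm p x \<le> C * lp_norm p y"
  proof -
    have "(\<Sum>i. norm (x i) powr p) \<le> (\<Sum>i. C powr p * norm (y (i + n)) powr p)"
      by (rule suminf_le[OF le' sx sy'])
    also have "\<dots> = C powr p * (\<Sum>i. norm (y (i + n)) powr p)"
      using summable_ignore_initial_segment[OF sy, of n] by (simp add: suminf_mult)
    also have "(\<Sum>i. norm (y (i + n)) powr p) \<le> (\<Sum>i. norm (y i) powr p)"
    proof -
      have "(\<Sum>i. norm (y i) powr p) = (\<Sum>i. norm (y (i + n)) powr p) + (\<Sum>i<n. norm (y i) powr p)"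
        by (rule suminf_split_initial_segment[OF sy])
      moreover have "0 \<le> (\<Sum>i<n. norm (y i) powr p)" by (simp add: sum_nonneg)
      ultimately show ?thesis by linarith
    qed
    then have "C powr p * (\<Sum>i. norm (y (i + n)) powr p) \<le> C powr p * (\<Sum>i. norm (y i) powr p)"
      by (intro mult_left_mono) auto
    finally have A: "(\<Sum>i. norm (x i) powr p) \<le> C powr p * (\<Sum>i. norm (y i) powr p)" .
    have "lp_norm p x \<le> (C powr p * (\<Sum>i. norm (y i) powr p)) powr (1/p)"
      unfolding lp_norm_def using A pp by (intro powr_mono2) (auto intro!: suminf_nonneg sx)
    also have "\<dots> = C * lp_norm p y"
      unfolding lp_norm_def using C pp
      by (subst powr_mult) (auto simp: powr_powr intro!: suminf_nonneg sy)
    finally show ?thesis using sx by (simp add: lp_seq_def)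
  qed
next
  have pp: "0 < p" using p by simp
  fix x y :: "nat \<Rightarrow> 'a"
  assume x: "x \<in> lp_seq p" and y: "y \<in> lp_seq p"
  have sx: "summable (\<lambda>n. norm (x n) powr p)" using x by (simp add: lp_seq_def)
  have sy: "summable (\<lambda>n. norm (y n) powr p)" using y by (simp add: lp_seq_def)
  define A where "A = (\<Sum>n. norm (x n) powr p)"
  define B where "B = (\<Sum>n. norm (y n) powr p)"
  have A0: "0 \<le> A" unfolding A_def by (intro suminf_nonneg sx) simp
  have B0: "0 \<le> B" unfolding B_def by (intro suminf_nonneg sy) simp
  have le: "norm (x i + y i) powr p \<le> 2 powr p * (norm (x i) powr p + norm (y i) powr p)" for i
  proof -
    have "norm (x i + y i) powr p \<le> (norm (x i) + norm (y i)) powr p"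
      using pp by (intro powr_mono2) (auto intro: norm_triangle_ineq)
    also have "\<dots> \<le> 2 powr p * (norm (x i) powr p + norm (y i) powr p)"
      using pp by (intro powr_sum_le2) auto
    finally show ?thesis .
  qed
  have s2: "summable (\<lambda>i. 2 powr p * (norm (x i) powr p + norm (y i) powr p))"
    by (intro summable_mult summable_add sx sy)
  have sxy: "summable (\<lambda>i. norm (x i + y i) powr p)"
    by (rule summable_comparison_test'[OF s2]) (use le in auto)
  have S: "(\<Sum>i. norm (x i + y i) powr p) \<le> 2 powr p * (A + B)"
    using suminf_le[OF le sxy s2] sx sy unfolding A_def B_def
    by (simp add: suminf_mult suminf_add[OF sx sy, symmetric] summable_add)
  have "lp_norm p (\<lambda>i. x i + y i) \<le> (2 powr p * (A + B)) powr (1/p)"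
    unfolding lp_norm_def using S pp by (intro powr_mono2) (auto intro!: suminf_nonneg sxy)
  also have "\<dots> = 2 * (A + B) powr (1/p)"
    using A0 B0 pp by (simp add: powr_mult powr_powr)
  also have "\<dots> \<le> 2 * (2 powr (1/p) * (A powr (1/p) + B powr (1/p)))"
    using A0 B0 pp by (intro mult_left_mono powr_sum_le2) auto
  also have "\<dots> \<le> 2 * (2 * (A powr (1/p) + B powr (1/p)))"
  proof -
    have "2 powr (1/p) \<le> 2 powr 1" using p by (intro powr_mono) auto
    then show ?thesis by (intro mult_left_mono mult_right_mono) auto
  qed
  also have "\<dots> = 4 * (lp_norm p x + lp_norm p y)"
    unfolding lp_norm_def A_def B_def by simp
  finally show "(\<lambda>i. x i + y i) \<in> lp_seq p \<and> lp_norm p (\<lambda>i. x i + y i) \<le> 4 * (lp_norm p x + lp_norm p y)"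
    using sxy by (simp add: lp_seq_def)
next
  have pp: "0 < p" using p by simp
  fix j :: "nat \<Rightarrow> nat" and v :: "nat \<Rightarrow> 'a"
  assume j: "strict_mono j" and sv: "summable (\<lambda>l. norm (v l))"
  define S where "S = (\<Sum>l. norm (v l))"
  have vS: "norm (v l) \<le> S" for l unfolding S_def by (rule single_le_suminf[OF sv]) simp
  have key: "norm (v l) powr p \<le> S powr (p - 1) * norm (v l)" for l
  proof (cases "v l = 0")
    case True then show ?thesis by simp
  next
    case False
    then have "norm (v l) powr p = norm (v l) powr (p - 1) * norm (v l)"
      by (simp add: powr_diff)
    also have "\<dots> \<le> S powr (p - 1) * norm (v l)"
      using vS[of l] p by (intro mult_right_mono powr_mono2) auto
    finally show ?thesis .
  qed
  have s1: "summable (\<lambda>l. S powr (p - 1) * norm (v l))" by (intro summable_mult sv)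
  have s2: "summable (\<lambda>l. norm (v l) powr p)"
    by (rule summable_comparison_test'[OF s1]) (use key in auto)
  have zero: "\<And>n. n \<notin> range j \<Longrightarrow> norm (sp j v n) powr p = 0"
    by (simp add: sp_out)
  have eq: "(\<lambda>l. norm (sp j v (j l)) powr p) = (\<lambda>l. norm (v l) powr p)"
    by (simp add: sp_at[OF j])
  have ssp: "summable (\<lambda>n. norm (sp j v n) powr p)"
    using summable_mono_reindex[of j "\<lambda>n. norm (sp j v n) powr p", OF j zero] s2 eq by simp
  have seq: "(\<Sum>n. norm (sp j v n) powr p) = (\<Sum>l. norm (v l) powr p)"
    using suminf_mono_reindex[of j "\<lambda>n. norm (sp j v n) powr p", OF j zero] eq by simp
  have "(\<Sum>l. norm (v l) powr p) \<le> (\<Sum>l. S powr (p - 1) * norm (v l))"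
    by (rule suminf_le[OF key s2 s1])
  also have "\<dots> = S powr (p - 1) * S" unfolding S_def using sv by (simp add: suminf_mult)
  also have "\<dots> = S powr p"
  proof (cases "S = 0")
    case True then show ?thesis using pp by simp
  next
    case False
    then have "0 < S" using vS[of 0] norm_ge_zero[of "v 0"] by linarith
    then show ?thesis by (simp add: powr_diff)
  qed
  finally have le: "(\<Sum>n. norm (sp j v n) powr p) \<le> S powr p" using seq by simp
  have S0: "0 \<le> S" using vS[of 0] norm_ge_zero[of "v 0"] by linarith
  have "lp_norm p (sp j v) \<le> (S powr p) powr (1/p)"
    unfolding lp_norm_def using le pp by (intro powr_mono2) (auto intro!: suminf_nonneg ssp)
  also have "\<dots> = S" using S0 pp by (simp add: powr_powr)
  finally show "sp j v \<in> lp_seq p \<and> lp_norm p (sp j v) \<le> (\<Sum>l. norm (v l))"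
    using ssp by (simp add: lp_seq_def S_def)
next
  have pp: "0 < p" using p by simp
  fix x :: "nat \<Rightarrow> 'a" and e :: real
  assume x: "x \<in> lp_seq p" and e: "0 < e"
  have s: "summable (\<lambda>n. norm (x n) powr p)" using x by (simp add: lp_seq_def)
  define f where "f = (\<lambda>n. norm (x n) powr p)"
  have "(\<lambda>L. suminf f - (\<Sum>i<L. f i)) \<longlonglongrightarrow> suminf f - suminf f"
    by (intro tendsto_diff tendsto_const summable_LIMSEQ) (use s f_def in simp)
  then have "\<forall>\<^sub>F L in sequentially. suminf f - (\<Sum>i<L. f i) < e powr p"
    using e by (intro order_tendstoD) auto
  then obtain L where L: "suminf f - (\<Sum>i<L. f i) < e powr p"
    by (auto simp: eventually_sequentially)
  define g where "g = (\<lambda>i. norm (if i < L then 0 else x i) powr p)"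
  have gs: "summable g"
    by (rule summable_comparison_test'[OF s]) (auto simp: g_def)
  have "suminf g = (\<Sum>n. g (n + L)) + (\<Sum>i<L. g i)"
    by (rule suminf_split_initial_segment[OF gs])
  also have "(\<Sum>i<L. g i) = 0" by (simp add: g_def)
  also have "(\<lambda>n. g (n + L)) = (\<lambda>n. f (n + L))" by (simp add: g_def f_def)
  also have "(\<Sum>n. f (n + L)) = suminf f - (\<Sum>i<L. f i)"
    using suminf_split_initial_segment[of f L] s f_def by simp
  finally have "suminf g < e powr p" using L by simp
  then have "suminf g powr (1/p) < (e powr p) powr (1/p)"
    using pp gs by (intro powr_less_mono2) (auto intro!: suminf_nonneg simp: g_def)
  then show "\<exists>L. lp_norm p (\<lambda>i. if i < L then 0 else x i) < e"
    using e pp by (intro exI[of _ L]) (simp add: lp_norm_def g_def powr_powr)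
qed

lemma c0_bdd: "x \<in> c0_seq \<Longrightarrow> bdd_above (range (\<lambda>n. norm (x n)))"
proof -
  assume "x \<in> c0_seq"
  then have "Bseq x" unfolding c0_seq_def by (auto intro!: convergent_imp_Bseq convergentI)
  then obtain K where "\<And>n. norm (x n) \<le> K" unfolding Bseq_def by auto
  then show ?thesis by (intro bdd_aboveI2) auto
qed

lemma c0_upper: "x \<in> c0_seq \<Longrightarrow> norm (x i) \<le> c0_norm x"
  unfolding c0_norm_def by (rule cSUP_upper[OF _ c0_bdd]) auto

lemma c0_least: "(\<And>i. norm (x i) \<le> B) \<Longrightarrow> c0_norm x \<le> B"
  unfolding c0_norm_def by (rule cSUP_least) auto

lemma c0_qnorm: "qnorm (c0_seq :: (nat \<Rightarrow> 'a::real_normed_field) set) c0_norm"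
proof
  fix x :: "nat \<Rightarrow> 'a" and i
  assume "x \<in> c0_seq" then show "norm (x i) \<le> c0_norm x" by (rule c0_upper)
next
  fix y x :: "nat \<Rightarrow> 'a" and C :: real and n
  assume y: "y \<in> c0_seq" and C: "0 \<le> C" and le: "\<And>i. norm (x i) \<le> C * norm (y (i + n))"
  have "(\<lambda>i. y (i + n)) \<longlonglongrightarrow> 0" using y unfolding c0_seq_def
    by (simp add: LIMSEQ_ignore_initial_segment)
  then have "(\<lambda>i. C * norm (y (i + n))) \<longlonglongrightarrow> 0"
    using tendsto_mult_right_zero tendsto_norm_zero by blast
  then have "x \<longlonglongrightarrow> 0" by (rule Lim_null_comparison[rotated]) (use le in auto)
  moreover have "c0_norm x \<le> C * c0_norm y"
    by (rule c0_least) (meson C c0_upper dual_order.trans le mult_left_mono y)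
  ultimately show "x \<in> c0_seq \<and> c0_norm x \<le> C * c0_norm y" by (simp add: c0_seq_def)
next
  fix x y :: "nat \<Rightarrow> 'a"
  assume x: "x \<in> c0_seq" and y: "y \<in> c0_seq"
  have "(\<lambda>i. x i + y i) \<longlonglongrightarrow> 0" using x y unfolding c0_seq_def
    using tendsto_add by fastforce
  moreover have "c0_norm (\<lambda>i. x i + y i) \<le> c0_norm x + c0_norm y"
    by (rule c0_least) (meson add_mono c0_upper norm_triangle_ineq order_trans x y)
  moreover have "0 \<le> c0_norm x" "0 \<le> c0_norm y"
    using c0_upper[OF x, of 0] c0_upper[OF y, of 0] norm_ge_zero order_trans by blast+
  ultimately show "(\<lambda>i. x i + y i) \<in> c0_seq \<and> c0_norm (\<lambda>i. x i + y i) \<le> 4 * (c0_norm x + c0_norm y)"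
    by (simp add: c0_seq_def)
next
  fix j :: "nat \<Rightarrow> nat" and v :: "nat \<Rightarrow> 'a"
  assume j: "strict_mono j" and sv: "summable (\<lambda>l. norm (v l))"
  have vS: "norm (v l) \<le> (\<Sum>l. norm (v l))" for l by (rule single_le_suminf[OF sv]) simp
  have v0: "v \<longlonglongrightarrow> 0" using summable_LIMSEQ_zero[OF sv] tendsto_norm_zero_iff by blast
  have "sp j v \<longlonglongrightarrow> 0"
  proof (rule LIMSEQ_I)
    fix r :: real assume r: "0 < r"
    obtain L0 where L0: "\<And>l. l \<ge> L0 \<Longrightarrow> norm (v l) < r"
      using LIMSEQ_D[OF v0 r] by auto
    show "\<exists>no. \<forall>n\<ge>no. norm (sp j v n - 0) < r"
    proof (intro exI allI impI)
      fix n assume n: "j L0 \<le> n"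
      show "norm (sp j v n - 0) < r"
      proof (cases "n \<in> range j")
        case True
        then obtain l where l: "n = j l" by auto
        then have "l \<ge> L0" using n j by (simp add: strict_mono_less_eq)
        then show ?thesis using L0[of l] l sp_at[OF j, of v l] by simp
      next
        case False then show ?thesis using r by (simp add: sp_out)
      qed
    qed
  qed
  moreover have "c0_norm (sp j v) \<le> (\<Sum>l. norm (v l))"
  proof (rule c0_least)
    fix i show "norm (sp j v i) \<le> (\<Sum>l. norm (v l))"
      using vS unfolding sp_def by (auto intro: order_trans[OF _ vS] simp: suminf_nonneg sv)
  qed
  ultimately show "sp j v \<in> c0_seq \<and> c0_norm (sp j v) \<le> (\<Sum>l. norm (v l))"
    by (simp add: c0_seq_def)
next
  fix x :: "nat \<Rightarrow> 'a" and e :: real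
  assume x: "x \<in> c0_seq" and e: "0 < e"
  have "e / 2 > 0" using e by simp
  from LIMSEQ_D[OF _ this] x obtain L where L: "\<And>n. n \<ge> L \<Longrightarrow> norm (x n) < e / 2"
    unfolding c0_seq_def by fastforce
  have "c0_norm (\<lambda>i. if i < L then 0 else x i) \<le> e / 2"
    by (rule c0_least) (use L e in \<open>auto simp: less_imp_le\<close>)
  then show "\<exists>L. c0_norm (\<lambda>i. if i < L then 0 else x i) < e" using e by (intro exI[of _ L]) simp
qed




definition aw :: "(nat \<Rightarrow> 'a::real_normed_field) \<Rightarrow> nat \<Rightarrow> nat \<Rightarrow> 'a" where
  "aw w m n = (\<Prod>j\<in>{m+2..m+n+1}. w j)"

lemma aw_0[simp]: "aw w m 0 = 1" by (simp add: aw_def)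

lemma aw_Suc: "aw w m (Suc n) = w (m + 2) * aw w (Suc m) n"
proof -
  have "{m+2..m + Suc n + 1} = insert (m+2) {Suc m + 2..Suc m + n + 1}" by auto
  then show ?thesis unfolding aw_def by simp
qed

lemma bw_app: "bw_shift w x m = w (m+2) * x (m+1)" by (simp add: bw_shift_def)

lemma iter_bw: "(bw_shift w ^^ n) x m = aw w m n * x (m + n)"
proof (induction n arbitrary: m)
  case 0 then show ?case by simp
next
  case (Suc n)
  have "(bw_shift w ^^ Suc n) x m = bw_shift w ((bw_shift w ^^ n) x) m" by simp
  also have "\<dots> = w (m+2) * (bw_shift w ^^ n) x (m+1)" by (rule bw_app)
  also have "\<dots> = aw w m (Suc n) * x (m + Suc n)" using Suc[of "m+1"] by (simp add: aw_Suc)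
  finally show ?case .
qed

lemma iter_diff: "(bw_shift w ^^ n) (seq_diff x y) = seq_diff ((bw_shift w ^^ n) x) ((bw_shift w ^^ n) y)"
  by (simp add: fun_eq_iff iter_bw seq_diff_def algebra_simps)

lemma iter_zero: "(bw_shift w ^^ n) (\<lambda>i. 0) = (\<lambda>i. 0)"
  by (simp add: fun_eq_iff iter_bw)

lemma aw_bound:
  assumes "\<forall>j\<ge>1. norm (w j) \<le> K" "1 \<le> K"
  shows "norm (aw w m n) \<le> K ^ n"
proof (induction n arbitrary: m)
  case 0 then show ?case by simp
next
  case (Suc n)
  have "norm (aw w m (Suc n)) = norm (w (m+2)) * norm (aw w (Suc m) n)"
    by (simp add: aw_Suc norm_mult)
  also have "\<dots> \<le> K * K ^ n"
    using assms Suc[of "Suc m"] by (intro mult_mono) auto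
  finally show ?case by simp
qed

context qnorm
begin

lemma N_nonneg: "x \<in> X \<Longrightarrow> 0 \<le> N x"
  using A1[of x 0] norm_ge_zero order_trans by blast

lemma zero_in: "(\<lambda>i. 0) \<in> X \<and> N (\<lambda>i. 0) = 0"
proof -
  have "sp id (\<lambda>l. 0) \<in> X" using A5[of id "\<lambda>l. 0"] by (simp add: strict_mono_def)
  moreover have "sp id (\<lambda>l. 0) = (\<lambda>i. 0::'a)" by (simp add: sp_def fun_eq_iff)
  ultimately have z: "(\<lambda>i. 0::'a) \<in> X" by simp
  have "N (\<lambda>i. 0::'a) \<le> 0 * N (\<lambda>i. 0)" by (rule conjunct2[OF A2[OF z]]) auto
  then show ?thesis using N_nonneg[OF z] z by simp
qed

lemma scal: "x \<in> X \<Longrightarrow> (\<lambda>i. c * x i) \<in> X \<and> N (\<lambda>i. c * x i) \<le> norm c * N x"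
  using A2[of x "norm c" "\<lambda>i. c * x i" 0] by (simp add: norm_mult)

lemma fsum:
  assumes "finite F" "\<And>r. r \<in> F \<Longrightarrow> f r \<in> X"
  shows "(\<lambda>i. \<Sum>r\<in>F. f r i) \<in> X \<and> N (\<lambda>i. \<Sum>r\<in>F. f r i) \<le> 4 ^ card F * (\<Sum>r\<in>F. N (f r))"
  using assms
proof (induction F rule: finite_induct)
  case empty then show ?case using zero_in by simp
next
  case (insert a F)
  have fa: "f a \<in> X" using insert by simp
  have IH: "(\<lambda>i. \<Sum>r\<in>F. f r i) \<in> X" "N (\<lambda>i. \<Sum>r\<in>F. f r i) \<le> 4 ^ card F * (\<Sum>r\<in>F. N (f r))"
    using insert by auto
  have eq: "(\<lambda>i. \<Sum>r\<in>insert a F. f r i) = (\<lambda>i. f a i + (\<Sum>r\<in>F. f r i))"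
    using insert by simp
  have s0: "0 \<le> (\<Sum>r\<in>F. N (f r))" using insert N_nonneg by (auto intro!: sum_nonneg)
  have n0: "0 \<le> N (f a)" using N_nonneg fa by simp
  have "N (\<lambda>i. f a i + (\<Sum>r\<in>F. f r i)) \<le> 4 * (N (f a) + N (\<lambda>i. \<Sum>r\<in>F. f r i))"
    using A3[OF fa IH(1)] by simp
  also have "\<dots> \<le> 4 * (N (f a) + 4 ^ card F * (\<Sum>r\<in>F. N (f r)))" using IH(2) by simp
  also have "\<dots> \<le> 4 ^ card (insert a F) * (\<Sum>r\<in>insert a F. N (f r))"
  proof -
    have "(1::real) \<le> 4 ^ card F" by simp
    then have "N (f a) \<le> 4 ^ card F * N (f a)" using n0 by (simp add: mult_le_cancel_right1)
    then show ?thesis using insert s0 by (simp add: algebra_simps)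
  qed
  finally show ?case using eq A3[OF fa IH(1)] by simp
qed

lemma iterX:
  assumes "\<forall>j\<ge>1. norm (w j) \<le> K" "1 \<le> K" "y \<in> X"
  shows "(bw_shift w ^^ n) y \<in> X"
proof -
  have "norm ((bw_shift w ^^ n) y i) \<le> K ^ n * norm (y (i + n))" for i
    using aw_bound[OF assms(1,2), of i n] by (simp add: iter_bw norm_mult mult_right_mono)
  then show ?thesis using A2[OF assms(3), where C="K^n" and x="(bw_shift w ^^ n) y" and n=n] assms(2) by simp
qed

lemma iter_bounded:
  assumes "\<forall>m n. norm (aw w m n) \<le> C" "y \<in> X"
  shows "(bw_shift w ^^ n) y \<in> X \<and> N ((bw_shift w ^^ n) y) \<le> C * N y"
proof -
  have C: "0 \<le> C" using assms(1) norm_ge_zero order_trans by blast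
  have le: "norm ((bw_shift w ^^ n) y i) \<le> C * norm (y (i + n))" for i
    using assms(1) by (simp add: iter_bw norm_mult mult_right_mono)
  show ?thesis by (rule A2[OF assms(2) C, where x="(bw_shift w ^^ n) y" and n=n, OF le])
qed

end




lemma poly_lower:
  fixes b :: "nat \<Rightarrow> 'a::real_normed_field" and lam :: real
  assumes F: "finite F" and r0: "r0 \<in> F" and minr: "\<And>r. r \<in> F \<Longrightarrow> b r \<noteq> 0 \<Longrightarrow> r0 \<le> r"
    and l0: "0 \<le> lam" and l1: "lam \<le> 1"
    and small: "lam * (\<Sum>r\<in>F. norm (b r)) \<le> norm (b r0) / 2"
  shows "lam ^ r0 * (norm (b r0) / 2) \<le> norm (\<Sum>r\<in>F. b r * of_real lam ^ r)"
proof -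
  have split: "(\<Sum>r\<in>F. b r * of_real lam ^ r) = b r0 * of_real lam ^ r0 + (\<Sum>r\<in>F - {r0}. b r * of_real lam ^ r)"
    using F r0 by (simp add: sum.remove)
  have each: "norm (b r * of_real lam ^ r) \<le> lam ^ r0 * lam * norm (b r)" if "r \<in> F - {r0}" for r
  proof (cases "b r = 0")
    case True then show ?thesis using l0 by simp
  next
    case False
    then have "r0 < r" using minr that by force
    then have "lam ^ r \<le> lam ^ (Suc r0)" using l0 l1 by (intro power_decreasing) auto
    then have "lam ^ r * norm (b r) \<le> (lam * lam ^ r0) * norm (b r)" by (intro mult_right_mono) auto
    then show ?thesis using l0 by (simp add: norm_mult norm_power algebra_simps)
  qed
  have "norm (\<Sum>r\<in>F - {r0}. b r * of_real lam ^ r) \<le> (\<Sum>r\<in>F - {r0}. lam ^ r0 * lam * norm (b r))"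
    by (rule order_trans[OF norm_sum sum_mono]) (use each in auto)
  also have "\<dots> = lam ^ r0 * (lam * (\<Sum>r\<in>F - {r0}. norm (b r)))" by (simp add: sum_distrib_left mult.assoc)
  also have "\<dots> \<le> lam ^ r0 * (lam * (\<Sum>r\<in>F. norm (b r)))"
    using F l0 by (intro mult_left_mono sum_mono2) auto
  also have "\<dots> \<le> lam ^ r0 * (norm (b r0) / 2)" using small l0 by (intro mult_left_mono) auto
  finally have rest: "norm (\<Sum>r\<in>F - {r0}. b r * of_real lam ^ r) \<le> lam ^ r0 * (norm (b r0) / 2)" .
  have "norm (b r0 * of_real lam ^ r0) = lam ^ r0 * norm (b r0)" using l0 by (simp add: norm_mult norm_power)
  then show ?thesis using split rest norm_triangle_ineq2[of "b r0 * of_real lam ^ r0" "-(\<Sum>r\<in>F - {r0}. b r * of_real lam ^ r)"]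
    by (simp add: algebra_simps)
qed

lemma pow_ineq:
  assumes "r0 \<le> l"
  shows "real (l+1) \<le> real (l+1) ^ (l+1) * (1 / real (l+1)) ^ r0"
proof -
  have "real (l+1) ^ (l+1) = real (l+1) ^ (l+1-r0) * real (l+1) ^ r0"
    using assms by (simp add: power_add[symmetric])
  then have "real (l+1) ^ (l+1) * (1 / real (l+1)) ^ r0 = real (l+1) ^ (l+1-r0)"
    by (simp add: power_one_over)
  moreover have "real (l+1) ^ 1 \<le> real (l+1) ^ (l+1-r0)"
    using assms by (intro power_increasing) auto
  ultimately show ?thesis by simp
qed

locale constr = qnorm X N for X :: "(nat \<Rightarrow> 'a::real_normed_field) set" and N +
  fixes w :: "nat \<Rightarrow> 'a" and K :: real
  assumes K1: "1 \<le> K" and wK: "\<forall>j\<ge>1. norm (w j) \<le> K"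
    and unb: "\<forall>B. \<exists>m n. B < norm (aw w m n)"
begin

lemma big: "\<exists>m n. B \<le> norm (aw w m n) \<and> L \<le> n"
proof -
  obtain m n where mn: "max B (K^L) < norm (aw w m n)" using unb by blast
  have "L \<le> n"
  proof (rule ccontr)
    assume "\<not> L \<le> n" then have "K^n \<le> K^L" using K1 by (intro power_increasing) auto
    with aw_bound[OF wK K1, of m n] mn show False by simp
  qed
  then show ?thesis using mn by (intro exI[of _ m] exI[of _ n]) auto
qed

definition ch :: "real \<Rightarrow> nat \<Rightarrow> nat \<times> nat" where
  "ch B L = (SOME mn. B \<le> norm (aw w (fst mn) (snd mn)) \<and> L \<le> snd mn)"

lemma ch: "B \<le> norm (aw w (fst (ch B L)) (snd (ch B L))) \<and> L \<le> snd (ch B L)"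
proof -
  obtain m n where "B \<le> norm (aw w m n) \<and> L \<le> n" using big by blast
  then show ?thesis unfolding ch_def
    by (rule someI[where P="\<lambda>mn. B \<le> norm (aw w (fst mn) (snd mn)) \<and> L \<le> snd mn" and x="(m,n)", simplified])
qed

definition cc :: "nat \<Rightarrow> nat \<Rightarrow> real" where "cc l J = (1/4)^(l+1) / K^(J+1)"

primrec mn :: "nat \<Rightarrow> nat \<times> nat" where
  "mn 0 = ch (1 / cc 0 0) 1"
| "mn (Suc l) = ch (real (l+2)^(l+2) / cc (Suc l) (fst (mn l) + snd (mn l))) (fst (mn l) + snd (mn l) + 1)"

definition "mm l = fst (mn l)"
definition "q l = snd (mn l)"
definition "jj l = mm l + q l"
definition "Jp l = (if l = 0 then 0 else jj (l - 1))"
definition "c l = cc l (Jp l)"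
definition "p k = jj k + 1"
definition "lam l = 1 / real (l+1)"

lemma mn_prop: "real (l+1)^(l+1) / c l \<le> norm (aw w (mm l) (q l)) \<and> Jp l + 1 \<le> q l"
proof (cases l)
  case 0 then show ?thesis using ch[of "1 / cc 0 0" 1] by (simp add: mm_def q_def Jp_def c_def)
next
  case (Suc l')
  then show ?thesis
    using ch[of "real (l'+2)^(l'+2) / cc (Suc l') (fst (mn l') + snd (mn l'))" "fst (mn l') + snd (mn l') + 1"]
    by (simp add: mm_def q_def Jp_def c_def jj_def)
qed

lemma c_pos: "0 < c l" using K1 by (simp add: c_def cc_def)

lemma c_le: "c l \<le> (1/4)^(l+1)"
proof -
  have KK: "1 \<le> K ^ (Jp l + 1)" by (rule one_le_power) (use K1 in simp)
  have KP: "0 < K ^ (Jp l + 1)" using K1 by simp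
  have "(1/4::real)^(l+1) / K ^ (Jp l + 1) \<le> (1/4)^(l+1) / 1"
    by (rule divide_left_mono[OF KK]) (use KP in auto)
  then show ?thesis unfolding c_def cc_def by simp
qed

lemma aw_c_big: "real (l+1)^(l+1) \<le> c l * norm (aw w (mm l) (q l))"
  using mn_prop[of l] c_pos[of l] by (simp add: divide_le_eq mult.commute)

lemma jj_mono: "strict_mono jj"
proof (rule strict_mono_Suc_iff[THEN iffD2], intro allI)
  fix l
  have "jj l + 1 \<le> q (Suc l)" using mn_prop[of "Suc l"] by (simp add: Jp_def)
  then show "jj l < jj (Suc l)" by (simp add: jj_def)
qed

lemma q_mono: "strict_mono q"
proof (rule strict_mono_Suc_iff[THEN iffD2], intro allI)
  fix l
  have "jj l + 1 \<le> q (Suc l)" using mn_prop[of "Suc l"] by (simp add: Jp_def)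
  then show "q l < q (Suc l)" by (simp add: jj_def)
qed

lemma p_mono: "strict_mono p"
  using jj_mono by (simp add: strict_mono_def p_def)

lemma jj_ge: "l \<le> jj l" using seq_suble[OF jj_mono] .

lemma summable_c: "summable c"
proof (rule summable_comparison_test'[where g="\<lambda>l. (1/4)^(l+1)"])
  show "summable (\<lambda>l. (1/4::real)^(l+1))" using summable_ignore_initial_segment[OF summable_geometric[of "1/4::real"], of 1] by simp
  show "norm (c n) \<le> (1/4)^(n+1)" for n using c_le[of n] c_pos[of n] by simp
qed

definition "zst = sp jj (\<lambda>l. of_real (c l) :: 'a)"
definition "zr r = sp jj (\<lambda>l. of_real (c l) * of_real (lam l) ^ r :: 'a)"

lemma lam_bounds: "0 \<le> lam l" "lam l \<le> 1" by (auto simp: lam_def)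

lemma zr_in: "zr r \<in> X \<and> N (zr r) \<le> (\<Sum>l. c l)"
proof -
  have le: "norm (of_real (c l) * of_real (lam l) ^ r :: 'a) \<le> c l" for l
  proof -
    have "lam l ^ r \<le> 1" using lam_bounds by (simp add: power_le_one)
    then show ?thesis using c_pos[of l] lam_bounds[of l]
      by (simp add: norm_mult norm_power mult_left_le)
  qed
  have s: "summable (\<lambda>l. norm (of_real (c l) * of_real (lam l) ^ r :: 'a))"
    by (rule summable_comparison_test'[OF summable_c]) (use le in auto)
  have "(\<Sum>l. norm (of_real (c l) * of_real (lam l) ^ r :: 'a)) \<le> (\<Sum>l. c l)"
    by (rule suminf_le[OF le s summable_c])
  then show ?thesis using A5[OF jj_mono s] unfolding zr_def by simp
qed

definition "G = (\<Sum>l. (1/2::real)^(l+1))"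

lemma summable_half: "summable (\<lambda>l. (1/2::real)^(l+1))"
  using summable_ignore_initial_segment[OF summable_geometric[of "1/2::real"], of 1] by simp

lemma zst_small: "(bw_shift w ^^ p k) zst \<in> X \<and> N ((bw_shift w ^^ p k) zst) \<le> (1/2)^(k+1) * G"
proof -
  define \<beta> where "\<beta> = (\<lambda>l. of_real ((1/2)^(k+1) * (1/2)^(l+1)) :: 'a)"
  have nb: "\<And>l. norm (\<beta> l) = (1/2)^(k+1) * (1/2)^(l+1)"
    unfolding \<beta>_def by (simp only: norm_of_real) simp
  have sb: "summable (\<lambda>l. norm (\<beta> l))"
    by (simp only: nb) (intro summable_mult summable_half)
  have sumb: "(\<Sum>l. norm (\<beta> l)) = (1/2)^(k+1) * G"
    unfolding G_def by (simp only: nb suminf_mult[OF summable_half])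
  have Y: "sp jj \<beta> \<in> X \<and> N (sp jj \<beta>) \<le> (1/2)^(k+1) * G"
    using A5[OF jj_mono sb] sumb by simp
  have dom: "norm ((bw_shift w ^^ p k) zst i) \<le> 1 * norm (sp jj \<beta> (i + p k))" for i
  proof (cases "i + p k \<in> range jj")
    case False then show ?thesis by (simp add: iter_bw zst_def sp_out)
  next
    case True
    then obtain l where l: "i + p k = jj l" by auto
    have "jj k < jj l" using l by (simp add: p_def)
    then have kl: "k < l" using jj_mono strict_mono_less by blast
    then have "jj k \<le> Jp l" unfolding Jp_def using jj_mono strict_mono_less_eq by fastforce
    then have "K ^ p k \<le> K ^ (Jp l + 1)" using K1 by (intro power_increasing) (auto simp: p_def)
    then have "norm (aw w i (p k)) \<le> K ^ (Jp l + 1)" using aw_bound[OF wK K1, of i "p k"] by simp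
    then have "norm (aw w i (p k)) * c l \<le> K ^ (Jp l + 1) * c l"
      using c_pos[of l] by (intro mult_right_mono) auto
    also have "\<dots> = (1/4)^(l+1)" using K1 by (simp add: c_def cc_def)
    also have "\<dots> = (1/2)^(l+1) * (1/2)^(l+1)" by (simp add: power_mult_distrib[symmetric])
    also have "\<dots> \<le> (1/2)^(k+1) * (1/2)^(l+1)"
      using kl by (intro mult_right_mono power_decreasing) auto
    finally have fin: "norm (aw w i (p k)) * c l \<le> (1/2)^(k+1) * (1/2)^(l+1)" .
    have e1: "(bw_shift w ^^ p k) zst i = aw w i (p k) * of_real (c l)"
      by (simp only: iter_bw zst_def l sp_at[OF jj_mono])
    have e2: "sp jj \<beta> (i + p k) = \<beta> l" by (simp only: l sp_at[OF jj_mono])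
    show ?thesis unfolding e1 e2 using fin c_pos[of l] by (simp only: nb norm_mult norm_of_real)
  qed
  have zst_in: "zst \<in> X"
  proof -
    have "summable (\<lambda>l. norm (of_real (c l) :: 'a))" using summable_c c_pos by (simp add: less_imp_le)
    from A5[OF jj_mono this] show ?thesis unfolding zst_def by (rule conjunct1)
  qed
  have "(bw_shift w ^^ p k) zst \<in> X \<and> N ((bw_shift w ^^ p k) zst) \<le> 1 * N (sp jj \<beta>)"
    by (rule A2[OF conjunct1[OF Y], where x="(bw_shift w ^^ p k) zst" and n="p k", OF _ dom]) simp
  then show ?thesis using Y by simp
qed

end




context constr
begin

definition "kk r = fst (prod_decode r)"
definition "ss r = snd (prod_decode r)"
definition "h r = (1/2::real) ^ ss r"
definition "ek k = (\<lambda>i. if i = k then 1 else 0 :: 'a)"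
definition "U r = (\<lambda>i. ek (kk r) i + of_real (h r) * zr r i)"
definition "Mset = {y. \<exists>F \<beta>. finite F \<and> y = (\<lambda>i. \<Sum>r\<in>F. \<beta> r * U r i)}"

lemma M_intro: "finite F \<Longrightarrow> (\<lambda>i. \<Sum>r\<in>F. \<beta> r * U r i) \<in> Mset"
  unfolding Mset_def by (intro CollectI exI conjI) (assumption, rule refl)

lemma ek_in: "ek k \<in> X"
proof -
  have e: "(\<lambda>l. norm (ek k l)) = (\<lambda>l. if l = k then 1 else 0)" by (auto simp: ek_def fun_eq_iff)
  have s: "summable (\<lambda>l. norm (ek k l))"
    unfolding e using sums_summable[OF sums_single[of k "\<lambda>_. 1::real"]] by simp
  have "sp id (ek k) = ek k" by (simp add: sp_def fun_eq_iff)
  then show ?thesis using A5[of id "ek k"] s by (simp add: strict_mono_def)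
qed

lemma U_in: "U r \<in> X"
proof -
  have "(\<lambda>i. of_real (h r) * zr r i) \<in> X" using scal zr_in by blast
  then show ?thesis unfolding U_def using A3[OF ek_in] by blast
qed

lemma M_sub: "Mset \<subseteq> X"
proof
  fix y assume "y \<in> Mset"
  then obtain F \<beta> where F: "finite F" and y: "y = (\<lambda>i. \<Sum>r\<in>F. \<beta> r * U r i)" unfolding Mset_def by blast
  have "(\<lambda>i. \<beta> r * U r i) \<in> X" for r using scal U_in by blast
  then show "y \<in> X" using fsum[OF F, of "\<lambda>r i. \<beta> r * U r i"] y by simp
qed

definition "Kd F = (\<Sum>r\<in>F. kk r + 1)"

lemma kk_lt: "finite F \<Longrightarrow> r \<in> F \<Longrightarrow> kk r < Kd F"
  unfolding Kd_def using member_le_sum[of r F "\<lambda>r. kk r + 1"] by simp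

lemma yval:
  assumes F: "finite F" and i: "Kd F \<le> i"
  shows "(\<Sum>r\<in>F. \<beta> r * U r i) = (\<Sum>r\<in>F. (\<beta> r * of_real (h r)) * zr r i)"
proof (rule sum.cong[OF refl])
  fix r assume "r \<in> F"
  then have "ek (kk r) i = 0" using kk_lt[OF F] i by (fastforce simp: ek_def)
  then show "\<beta> r * U r i = (\<beta> r * of_real (h r)) * zr r i" by (simp add: U_def algebra_simps)
qed

lemma yjj:
  assumes F: "finite F" and i: "Kd F \<le> jj l"
  shows "(\<Sum>r\<in>F. \<beta> r * U r (jj l)) = of_real (c l) * (\<Sum>r\<in>F. (\<beta> r * of_real (h r)) * of_real (lam l) ^ r)"
  unfolding yval[OF assms] by (simp add: zr_def sp_at[OF jj_mono] sum_distrib_left algebra_simps)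

lemma ydom:
  assumes F: "finite F" and i: "Kd F \<le> i"
  shows "norm (\<Sum>r\<in>F. \<beta> r * U r i) \<le> (\<Sum>r\<in>F. norm (\<beta> r * of_real (h r))) * norm (zst i)"
proof (cases "i \<in> range jj")
  case False
  then show ?thesis unfolding yval[OF assms] by (simp add: zr_def sp_out sum_nonneg)
next
  case True
  then obtain l where l: "i = jj l" by auto
  have "norm (\<Sum>r\<in>F. (\<beta> r * of_real (h r)) * of_real (lam l) ^ r) \<le> (\<Sum>r\<in>F. norm (\<beta> r * of_real (h r)))"
  proof (rule order_trans[OF norm_sum sum_mono])
    fix r
    have "lam l ^ r \<le> 1" using lam_bounds by (simp add: power_le_one)
    then show "norm (\<beta> r * of_real (h r) * of_real (lam l) ^ r) \<le> norm (\<beta> r * of_real (h r))"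
      using lam_bounds[of l] by (simp add: norm_mult norm_power mult_left_le)
  qed
  then have "c l * norm (\<Sum>r\<in>F. (\<beta> r * of_real (h r)) * of_real (lam l) ^ r) \<le> c l * (\<Sum>r\<in>F. norm (\<beta> r * of_real (h r)))"
    using c_pos[of l] by (intro mult_left_mono) auto
  then show ?thesis unfolding l yjj[OF F i[unfolded l]] using c_pos[of l]
    by (simp add: norm_mult zst_def sp_at[OF jj_mono] mult.commute)
qed

lemma small_M:
  assumes y: "y \<in> Mset"
  shows "(\<lambda>k. N ((bw_shift w ^^ p k) y)) \<longlonglongrightarrow> 0"
proof -
  obtain F \<beta> where F: "finite F" and yF: "y = (\<lambda>i. \<Sum>r\<in>F. \<beta> r * U r i)" using y unfolding Mset_def by blast
  define Bb where "Bb = (\<Sum>r\<in>F. norm (\<beta> r * of_real (h r)))"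
  have Bb0: "0 \<le> Bb" unfolding Bb_def by (simp add: sum_nonneg)
  have G0: "0 \<le> G" unfolding G_def by (intro suminf_nonneg summable_half) simp
  have yX: "y \<in> X" using y M_sub by blast
  have up: "N ((bw_shift w ^^ p k) y) \<le> Bb * G * (1/2)^k" if k: "Kd F \<le> k" for k
  proof -
    have pk: "Kd F \<le> p k" using k jj_ge[of k] by (simp add: p_def)
    have dom: "norm ((bw_shift w ^^ p k) y i) \<le> Bb * norm ((bw_shift w ^^ p k) zst (i + 0))" for i
    proof -
      have "norm ((bw_shift w ^^ p k) y i) = norm (aw w i (p k)) * norm (y (i + p k))"
        by (simp add: iter_bw norm_mult)
      also have "\<dots> \<le> norm (aw w i (p k)) * (Bb * norm (zst (i + p k)))"
        unfolding yF Bb_def using ydom[OF F, of "i + p k" \<beta>] pk by (intro mult_left_mono) auto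
      also have "\<dots> = Bb * norm ((bw_shift w ^^ p k) zst (i + 0))"
        by (simp add: iter_bw norm_mult)
      finally show ?thesis .
    qed
    have "N ((bw_shift w ^^ p k) y) \<le> Bb * N ((bw_shift w ^^ p k) zst)"
      by (rule conjunct2[OF A2[OF conjunct1[OF zst_small] Bb0, where x="(bw_shift w ^^ p k) y" and n=0, OF dom]])
    also have "\<dots> \<le> Bb * ((1/2)^(k+1) * G)" using zst_small[of k] Bb0 by (intro mult_left_mono) auto
    also have "\<dots> \<le> Bb * G * (1/2)^k" using Bb0 G0
      by (simp add: mult_left_mono mult.commute mult.left_commute)
    finally show ?thesis .
  qed
  show ?thesis
  proof (rule tendsto_sandwich[where f="\<lambda>_. 0" and h="\<lambda>k. Bb * G * (1/2)^k"])
    show "\<forall>\<^sub>F n in sequentially. 0 \<le> N ((bw_shift w ^^ p n) y)"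
      using N_nonneg iterX[OF wK K1 yX] by simp
    show "\<forall>\<^sub>F n in sequentially. N ((bw_shift w ^^ p n) y) \<le> Bb * G * (1/2)^n"
      using up unfolding eventually_sequentially by blast
    show "(\<lambda>k. Bb * G * (1/2::real)^k) \<longlonglongrightarrow> 0"
      by (intro tendsto_mult_right_zero LIMSEQ_realpow_zero) auto
  qed simp
qed

lemma big_M:
  assumes F: "finite F" and r1: "r1 \<in> F" "\<beta> r1 \<noteq> 0"
  defines "y \<equiv> (\<lambda>i. \<Sum>r\<in>F. \<beta> r * U r i)"
  shows "filterlim (\<lambda>l. N ((bw_shift w ^^ q l) y)) at_top sequentially"
proof -
  define b where "b r = \<beta> r * of_real (h r)" for r
  define Bb where "Bb = (\<Sum>r\<in>F. norm (b r))"
  define B' where "B' = {r\<in>F. b r \<noteq> 0}"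
  have hpos: "0 < h r" for r by (simp add: h_def)
  have "r1 \<in> B'" using r1 hpos[of r1] by (simp add: B'_def b_def)
  then have B'ne: "B' \<noteq> {}" and B'fin: "finite B'" using F by (auto simp: B'_def)
  define r0 where "r0 = Min B'"
  have r0B: "r0 \<in> B'" unfolding r0_def using B'ne B'fin by simp
  have r0F: "r0 \<in> F" and br0: "b r0 \<noteq> 0" using r0B by (auto simp: B'_def)
  have minr: "\<And>r. r \<in> F \<Longrightarrow> b r \<noteq> 0 \<Longrightarrow> r0 \<le> r" unfolding r0_def using B'fin by (auto simp: B'_def)
  define nb where "nb = norm (b r0)"
  have nb0: "0 < nb" using br0 by (simp add: nb_def)
  have yX: "y \<in> X" using M_sub M_intro[OF F, of \<beta>] unfolding y_def by blast
  show ?thesis unfolding filterlim_at_top eventually_sequentially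
  proof
    fix Z :: real
    obtain L1 :: nat where L1: "2 * Bb / nb \<le> real L1" using real_arch_simple by blast
    obtain L2 :: nat where L2: "2 * Z / nb \<le> real L2" using real_arch_simple by blast
    show "\<exists>L. \<forall>l\<ge>L. Z \<le> N ((bw_shift w ^^ q l) y)"
    proof (intro exI[of _ "r0 + Kd F + L1 + L2"] allI impI)
      fix l assume l: "r0 + Kd F + L1 + L2 \<le> l"
      have jl: "Kd F \<le> jj l" using l jj_ge[of l] by simp
      have lam: "lam l = 1 / real (l+1)" by (simp add: lam_def)
      have small: "lam l * Bb \<le> nb / 2"
      proof -
        have "2 * Bb \<le> nb * real L1" using L1 nb0 by (simp add: divide_le_eq mult.commute)
        also have "\<dots> \<le> nb * real (l+1)" using l nb0 by (intro mult_left_mono) auto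
        finally show ?thesis unfolding lam by (simp add: field_simps)
      qed
      have P: "lam l ^ r0 * (nb / 2) \<le> norm (\<Sum>r\<in>F. b r * of_real (lam l) ^ r)"
        unfolding nb_def
        by (rule poly_lower[OF F r0F minr lam_bounds]) (use small in \<open>simp_all add: Bb_def nb_def mult.commute\<close>)
      have "Z \<le> real (l+1) * (nb / 2)"
      proof -
        have "2 * Z \<le> nb * real L2" using L2 nb0 by (simp add: divide_le_eq mult.commute)
        also have "\<dots> \<le> nb * real (l+1)" using l nb0 by (intro mult_left_mono) auto
        finally have "2 * Z \<le> nb * real (l+1)" .
        moreover have "real (l+1) * (nb/2) = (nb * real (l+1)) / 2" by simp
        ultimately show ?thesis by linarith
      qed
      also have "\<dots> \<le> real (l+1) ^ (l+1) * (1 / real (l+1)) ^ r0 * (nb / 2)"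
        using pow_ineq[of r0 l] l nb0 by (intro mult_right_mono) auto
      also have "\<dots> = real (l+1) ^ (l+1) * (lam l ^ r0 * (nb / 2))" by (simp add: lam)
      also have "\<dots> \<le> (c l * norm (aw w (mm l) (q l))) * norm (\<Sum>r\<in>F. b r * of_real (lam l) ^ r)"
        using aw_c_big[of l] P c_pos[of l] nb0 lam_bounds[of l] by (intro mult_mono) auto
      also have "\<dots> = norm ((bw_shift w ^^ q l) y (mm l))"
        using yjj[OF F jl, of \<beta>] c_pos[of l] unfolding y_def b_def
        by (simp add: iter_bw norm_mult jj_def mult.commute mult.left_commute add.commute)
      also have "\<dots> \<le> N ((bw_shift w ^^ q l) y)" by (rule A1[OF iterX[OF wK K1 yX]])
      finally show "Z \<le> N ((bw_shift w ^^ q l) y)" .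
    qed
  qed
qed

end




context constr
begin

lemma pad:
  assumes "finite GG" "F \<subseteq> GG"
  shows "(\<Sum>r\<in>F. \<beta> r * U r i) = (\<Sum>r\<in>GG. (if r \<in> F then \<beta> r else 0) * U r i)"
proof -
  have "(\<Sum>r\<in>GG. (if r \<in> F then \<beta> r else 0) * U r i) = (\<Sum>r\<in>GG. if r \<in> F then \<beta> r * U r i else 0)"
    by (rule sum.cong) auto
  also have "\<dots> = (\<Sum>r\<in>GG \<inter> F. \<beta> r * U r i)" using sum.inter_restrict[OF assms(1)] by metis
  also have "GG \<inter> F = F" using assms(2) by blast
  finally show ?thesis by simp
qed

lemma M_zero: "(\<lambda>n. 0) \<in> Mset"
  using M_intro[of "{}" "\<lambda>_. 0"] by simp

lemma M_add:
  assumes "x \<in> Mset" "y \<in> Mset" shows "(\<lambda>n. x n + y n) \<in> Mset"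
proof -
  obtain F1 \<beta>1 where F1: "finite F1" and x: "x = (\<lambda>i. \<Sum>r\<in>F1. \<beta>1 r * U r i)" using assms(1) unfolding Mset_def by blast
  obtain F2 \<beta>2 where F2: "finite F2" and y: "y = (\<lambda>i. \<Sum>r\<in>F2. \<beta>2 r * U r i)" using assms(2) unfolding Mset_def by blast
  define \<gamma> where "\<gamma> r = (if r \<in> F1 then \<beta>1 r else 0) + (if r \<in> F2 then \<beta>2 r else 0)" for r
  have "(\<lambda>n. x n + y n) = (\<lambda>i. \<Sum>r\<in>F1 \<union> F2. \<gamma> r * U r i)"
  proof
    fix i
    have e1: "x i = (\<Sum>r\<in>F1 \<union> F2. (if r \<in> F1 then \<beta>1 r else 0) * U r i)"
      unfolding x by (rule pad) (use F1 F2 in auto)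
    have e2: "y i = (\<Sum>r\<in>F1 \<union> F2. (if r \<in> F2 then \<beta>2 r else 0) * U r i)"
      unfolding y by (rule pad) (use F1 F2 in auto)
    have "x i + y i = (\<Sum>r\<in>F1 \<union> F2. (if r \<in> F1 then \<beta>1 r else 0) * U r i) + (\<Sum>r\<in>F1 \<union> F2. (if r \<in> F2 then \<beta>2 r else 0) * U r i)"
      by (simp only: e1 e2)
    also have "\<dots> = (\<Sum>r\<in>F1 \<union> F2. \<gamma> r * U r i)"
      by (simp add: \<gamma>_def sum.distrib[symmetric] distrib_right)
    finally show "x i + y i = (\<Sum>r\<in>F1 \<union> F2. \<gamma> r * U r i)" .
  qed
  moreover have "(\<lambda>i. \<Sum>r\<in>F1 \<union> F2. \<gamma> r * U r i) \<in> Mset" using F1 F2 by (intro M_intro) simp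
  ultimately show ?thesis by simp
qed

lemma M_scal:
  assumes "x \<in> Mset" shows "(\<lambda>n. a * x n) \<in> Mset"
proof -
  obtain F \<beta> where F: "finite F" and x: "x = (\<lambda>i. \<Sum>r\<in>F. \<beta> r * U r i)" using assms unfolding Mset_def by blast
  have "(\<lambda>n. a * x n) = (\<lambda>i. \<Sum>r\<in>F. (a * \<beta> r) * U r i)"
    unfolding x by (simp add: sum_distrib_left mult.assoc)
  moreover have "(\<lambda>i. \<Sum>r\<in>F. (a * \<beta> r) * U r i) \<in> Mset" using F by (rule M_intro)
  ultimately show ?thesis by simp
qed

lemma M_diff:
  assumes "x \<in> Mset" "y \<in> Mset" shows "seq_diff x y \<in> Mset"
proof -
  have e: "seq_diff x y = (\<lambda>n. x n + (-1) * y n)" by (simp add: seq_diff_def fun_eq_iff)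
  have "(\<lambda>n. x n + (-1) * y n) \<in> Mset" by (rule M_add[OF assms(1) M_scal[OF assms(2)]])
  then show ?thesis using e by simp
qed

lemma M_sub_space: "seq_subspace Mset"
  unfolding seq_subspace_def using M_zero M_add M_scal by blast

lemma M_big:
  assumes "y \<in> Mset" "y \<noteq> (\<lambda>n. 0)"
  shows "filterlim (\<lambda>l. N ((bw_shift w ^^ q l) y)) at_top sequentially"
proof -
  obtain F \<beta> where F: "finite F" and y: "y = (\<lambda>i. \<Sum>r\<in>F. \<beta> r * U r i)" using assms unfolding Mset_def by blast
  have "\<exists>r1\<in>F. \<beta> r1 \<noteq> 0"
  proof (rule ccontr)
    assume "\<not> ?thesis" then have "y = (\<lambda>n. 0)" unfolding y by (simp add: fun_eq_iff)
    then show False using assms by simp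
  qed
  then obtain r1 where r1: "r1 \<in> F" "\<beta> r1 \<noteq> 0" by blast
  from big_M[of F r1 \<beta>, OF F r1] show ?thesis unfolding y .
qed

lemma M_dense: "dense_in_space X N Mset"
  unfolding dense_in_space_def
proof (intro conjI M_sub ballI allI impI)
  fix x :: "nat \<Rightarrow> 'a" and e :: real
  assume x: "x \<in> X" and e: "0 < e"
  obtain L where NL: "N (\<lambda>i. if i < L then 0 else x i) < e / 8" using A6[OF x, of "e/8"] e by auto
  define tl where "tl = (\<lambda>i. if i < L then 0 else x i)"
  have tlX: "tl \<in> X"
    using A2[OF x, where C=1 and x=tl and n=0] by (simp add: tl_def)
  define A where "A = (\<Sum>k<L. norm (x k))"
  define Cz where "Cz = (\<Sum>l. c l)"
  have A0: "0 \<le> A" unfolding A_def by (simp add: sum_nonneg)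
  have Cz0: "0 \<le> Cz" unfolding Cz_def using summable_c c_pos by (simp add: suminf_nonneg less_imp_le)
  have "(\<lambda>s. (4^L * (A * Cz)) * (1/2::real)^s) \<longlonglongrightarrow> 0"
    by (intro tendsto_mult_right_zero LIMSEQ_realpow_zero) auto
  then have "\<forall>\<^sub>F s in sequentially. (4^L * (A * Cz)) * (1/2::real)^s < e / 8"
    using e by (intro order_tendstoD) auto
  then obtain s where s: "(4^L * (A * Cz)) * (1/2::real)^s < e / 8" by (auto simp: eventually_sequentially)
  define enc where "enc k = prod_encode (k, s)" for k
  have inj: "inj_on enc {..<L}" by (auto simp: inj_on_def enc_def)
  have kk_enc: "kk (enc k) = k" and h_enc: "h (enc k) = (1/2)^s" for k
    by (auto simp: kk_def h_def ss_def enc_def)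
  define F where "F = enc ` {..<L}"
  define \<beta> where "\<beta> r = x (kk r)" for r
  define d where "d = (\<lambda>i. \<Sum>r\<in>F. \<beta> r * U r i)"
  have dM: "d \<in> Mset" unfolding d_def F_def by (rule M_intro) simp
  define W where "W = (\<lambda>i. \<Sum>k<L. (x k * of_real ((1/2)^s)) * zr (enc k) i)"
  have deq: "d i = (if i < L then x i else 0) + W i" for i
  proof -
    have "d i = (\<Sum>k<L. x k * U (enc k) i)"
      unfolding d_def F_def by (simp add: sum.reindex[OF inj] \<beta>_def kk_enc)
    also have "\<dots> = (\<Sum>k<L. x k * ek k i) + W i"
      by (simp add: U_def kk_enc h_enc W_def distrib_left sum.distrib mult.assoc)
    also have "(\<Sum>k<L. x k * ek k i) = (\<Sum>k<L. if k = i then x k else 0)"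
      by (rule sum.cong) (auto simp: ek_def)
    also have "\<dots> = (if i < L then x i else 0)" by simp
    finally show ?thesis .
  qed
  have Wi: "(\<lambda>i. (x k * of_real ((1/2)^s)) * zr (enc k) i) \<in> X \<and>
      N (\<lambda>i. (x k * of_real ((1/2)^s)) * zr (enc k) i) \<le> norm (x k) * (1/2)^s * Cz" for k
  proof -
    have "N (\<lambda>i. (x k * of_real ((1/2)^s)) * zr (enc k) i) \<le> norm (x k * of_real ((1/2)^s)) * N (zr (enc k))"
      using scal zr_in by blast
    also have "\<dots> \<le> norm (x k * of_real ((1/2)^s)) * Cz"
      using zr_in[of "enc k"] unfolding Cz_def by (intro mult_left_mono) auto
    finally have le: "N (\<lambda>i. (x k * of_real ((1/2)^s)) * zr (enc k) i) \<le> norm (x k * of_real ((1/2)^s)) * Cz" .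
    have nh: "norm (of_real ((1/2::real)^s) :: 'a) = (1/2)^s" by (simp only: norm_of_real) simp
    have "norm (x k * of_real ((1/2::real)^s)) = norm (x k) * (1/2)^s" by (simp only: norm_mult nh)
    then show ?thesis using le scal zr_in by metis
  qed
  have W: "W \<in> X \<and> N W \<le> 4^L * (A * Cz) * (1/2)^s"
  proof -
    have fs: "W \<in> X \<and> N W \<le> 4 ^ card {..<L} * (\<Sum>k<L. N (\<lambda>i. (x k * of_real ((1/2)^s)) * zr (enc k) i))"
      unfolding W_def by (rule fsum) (use Wi in auto)
    have "(\<Sum>k<L. N (\<lambda>i. (x k * of_real ((1/2)^s)) * zr (enc k) i)) \<le> (\<Sum>k<L. norm (x k) * (1/2)^s * Cz)"
      by (rule sum_mono) (use Wi in auto)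
    also have "\<dots> = A * Cz * (1/2)^s" unfolding A_def by (simp add: sum_distrib_right) (simp add: mult_ac)
    finally have "4 ^ card {..<L} * (\<Sum>k<L. N (\<lambda>i. (x k * of_real ((1/2)^s)) * zr (enc k) i)) \<le> 4^L * (A * Cz * (1/2)^s)"
      by (simp only: card_lessThan) (intro mult_left_mono, auto)
    with conjunct2[OF fs] have "N W \<le> 4^L * (A * Cz * (1/2)^s)" by (rule order_trans)
    then show ?thesis using conjunct1[OF fs] by (simp add: mult.assoc)
  qed
  have mW: "(\<lambda>i. (-1) * W i) \<in> X \<and> N (\<lambda>i. (-1) * W i) \<le> N W"
    using scal[of W "-1"] W by simp
  have sd: "seq_diff x d = (\<lambda>i. tl i + (-1) * W i)"
    by (simp add: seq_diff_def fun_eq_iff deq tl_def)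
  have "N (seq_diff x d) \<le> 4 * (N tl + N (\<lambda>i. (-1) * W i))"
    unfolding sd using A3[OF tlX conjunct1[OF mW]] by simp
  also have "\<dots> < e"
    using NL mW W s unfolding tl_def by simp
  finally show "\<exists>d\<in>Mset. N (seq_diff x d) < e" using dM by blast
qed

definition "g0 = (\<lambda>i. U 0 i)"

lemma U0_jj1: "U 0 (jj 1) = of_real (c 1)"
proof -
  have pd: "prod_decode 0 = (0, 0)" by (simp add: prod_decode_def prod_decode_aux.simps)
  have "jj 1 \<noteq> 0" using jj_ge[of 1] by simp
  then show ?thesis using pd
    by (simp add: U_def kk_def h_def ss_def ek_def zr_def sp_at[OF jj_mono])
qed

lemma U0_jj1': "U 0 (jj (Suc 0)) = of_real (c (Suc 0))" using U0_jj1 by simp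

lemma M_line: "(\<lambda>i. of_real a * U 0 i) \<in> Mset"
proof -
  have "(\<lambda>i. of_real a * U 0 i) = (\<lambda>i. \<Sum>r\<in>{0}. (\<lambda>_. of_real a) r * U r i)" by simp
  moreover have "(\<lambda>i. \<Sum>r\<in>{0::nat}. (\<lambda>_. of_real a) r * U r i) \<in> Mset" by (rule M_intro) simp
  ultimately show ?thesis by simp
qed

lemma M_unc: "uncountable Mset"
proof
  assume cM: "countable Mset"
  define f where "f a = (\<lambda>i. of_real a * U 0 i :: 'a)" for a :: real
  have "range f \<subseteq> Mset" using M_line by (auto simp: f_def)
  then have "countable (range f)" using cM countable_subset by blast
  moreover have "inj f"
  proof
    fix a b assume "f a = f b"
    then have "f a (jj 1) = f b (jj 1)" by simp
    then show "a = b" using c_pos[of "Suc 0"] by (simp add: f_def U0_jj1')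
  qed
  ultimately have "countable (UNIV :: real set)" using countable_image_inj_on by blast
  then show False using uncountable_UNIV_real by blast
qed

lemma U0_nz: "U 0 \<noteq> (\<lambda>i. 0)"
proof
  assume "U 0 = (\<lambda>i. 0)"
  then have "U 0 (jj 1) = 0" by simp
  then show False using U0_jj1' c_pos[of "Suc 0"] by simp
qed

lemma M_U0: "U 0 \<in> Mset" using M_line[of 1] by simp

lemma irr:
  assumes "y \<in> Mset" "y \<noteq> (\<lambda>n. 0)"
  shows "irregular_vec N (bw_shift w) y"
proof -
  define f where "f n = ereal (N ((bw_shift w ^^ n) y))" for n
  have yX: "y \<in> X" using assms M_sub by blast
  have "(f \<circ> p) \<longlonglongrightarrow> ereal 0" using small_M[OF assms(1)] by (simp add: f_def comp_def)
  then have "liminf (f \<circ> p) = 0" by (simp add: lim_imp_Liminf)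
  then have le: "liminf f \<le> 0" using liminf_subseq_mono[OF p_mono, of f] by simp
  have "0 \<le> liminf f"
    by (rule Liminf_bounded) (use N_nonneg iterX[OF wK K1 yX] in \<open>simp add: f_def\<close>)
  then have li: "liminf f = 0" using le by simp
  have "(f \<circ> q) \<longlonglongrightarrow> \<infinity>" using M_big[OF assms] by (simp add: f_def comp_def tendsto_PInfty_eq_at_top)
  then have "limsup (f \<circ> q) = \<infinity>" by (simp add: lim_imp_Limsup)
  then have "limsup f = \<infinity>" using limsup_subseq_mono[OF q_mono, of f] by (simp add: top_unique[where 'a=ereal, unfolded top_ereal_def])
  with li show ?thesis unfolding irregular_vec_def f_def by simp
qed

lemma LY:
  assumes "x \<in> Mset" "y \<in> Mset" "x \<noteq> y"
  shows "li_yorke_pair N (bw_shift w) x y"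
proof -
  have d: "seq_diff x y \<in> Mset" using M_diff assms by blast
  have "seq_diff x y \<noteq> (\<lambda>n. 0)"
  proof
    assume "seq_diff x y = (\<lambda>n. 0)" then have "x = y" by (simp add: seq_diff_def fun_eq_iff)
    then show False using assms by simp
  qed
  from irr[OF d this] show ?thesis
    unfolding li_yorke_pair_def irregular_vec_def iter_diff[symmetric] by simp
qed

lemma P5_true: "densely_uniformly_li_yorke_chaotic X N (bw_shift w)"
  unfolding densely_uniformly_li_yorke_chaotic_def
proof (intro exI[of _ Mset] conjI M_dense M_unc)
  show "uniformly_li_yorke_scrambled X N (bw_shift w) Mset"
    unfolding uniformly_li_yorke_scrambled_def
  proof (intro conjI M_sub)
    show "\<exists>x\<in>Mset. \<exists>y\<in>Mset. x \<noteq> y" using M_U0 M_zero U0_nz by blast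
  next
    have "\<forall>x\<in>Mset. \<forall>y\<in>Mset. x \<noteq> y \<longrightarrow>
        (\<lambda>n. N (seq_diff ((bw_shift w ^^ p n) x) ((bw_shift w ^^ p n) y))) \<longlonglongrightarrow> 0 \<and>
        filterlim (\<lambda>n. N (seq_diff ((bw_shift w ^^ q n) x) ((bw_shift w ^^ q n) y))) at_top sequentially"
    proof (intro ballI impI conjI)
      fix x y assume xy: "x \<in> Mset" "y \<in> Mset" "x \<noteq> y"
      have d: "seq_diff x y \<in> Mset" using M_diff xy by blast
      have nz: "seq_diff x y \<noteq> (\<lambda>n. 0)"
      proof
        assume "seq_diff x y = (\<lambda>n. 0)" then have "x = y" by (simp add: seq_diff_def fun_eq_iff)
        then show False using xy by simp
      qed
      show "(\<lambda>n. N (seq_diff ((bw_shift w ^^ p n) x) ((bw_shift w ^^ p n) y))) \<longlonglongrightarrow> 0"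
        using small_M[OF d] by (simp add: iter_diff[symmetric])
      show "filterlim (\<lambda>n. N (seq_diff ((bw_shift w ^^ q n) x) ((bw_shift w ^^ q n) y))) at_top sequentially"
        using M_big[OF d nz] by (simp add: iter_diff[symmetric])
    qed
    then show "\<exists>pp qq :: nat \<Rightarrow> nat. \<forall>x\<in>Mset. \<forall>y\<in>Mset. x \<noteq> y \<longrightarrow>
        (\<lambda>n. N (seq_diff ((bw_shift w ^^ pp n) x) ((bw_shift w ^^ pp n) y))) \<longlonglongrightarrow> 0 \<and>
        filterlim (\<lambda>n. N (seq_diff ((bw_shift w ^^ qq n) x) ((bw_shift w ^^ qq n) y))) at_top sequentially"
      by blast
  qed
qed

lemma P4_true: "dense_irregular_manifold X N (bw_shift w)"
  unfolding dense_irregular_manifold_def using M_sub_space M_dense irr by blast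

lemma P3_true: "li_yorke_chaotic X N (bw_shift w)"
  unfolding li_yorke_chaotic_def using M_sub M_unc LY by blast

lemma P2_true: "\<exists>x\<in>X. \<exists>y\<in>X. li_yorke_pair N (bw_shift w) x y"
  using LY[OF M_U0 M_zero U0_nz] M_sub M_U0 M_zero by blast

end




context qnorm
begin

lemma diffX: "x \<in> X \<Longrightarrow> y \<in> X \<Longrightarrow> seq_diff x y \<in> X"
proof -
  assume x: "x \<in> X" and y: "y \<in> X"
  have e: "seq_diff x y = (\<lambda>n. x n + (-1) * y n)" by (simp add: seq_diff_def fun_eq_iff)
  show ?thesis unfolding e using A3[OF x conjunct1[OF scal[OF y, of "-1"]]] by simp
qed

lemma e0_in: "(\<lambda>i. if i = 0 then 1 else 0 :: 'a) \<in> X"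
proof -
  have e: "(\<lambda>l. norm (if l = 0 then 1 else 0 :: 'a)) = (\<lambda>l. if l = 0 then 1 else 0)" by (auto simp: fun_eq_iff)
  have s: "summable (\<lambda>l. norm (if l = 0 then 1 else 0 :: 'a))"
    unfolding e using sums_summable[OF sums_single[of 0 "\<lambda>_. 1::real"]] by simp
  have "sp id (\<lambda>i. if i = 0 then 1 else 0 :: 'a) = (\<lambda>i. if i = 0 then 1 else 0)" by (simp add: sp_def fun_eq_iff)
  then show ?thesis using A5[OF _ s, of id] by (simp add: strict_mono_def)
qed

lemma mono_iter:
  assumes bd: "\<forall>m n. norm (aw w m n) \<le> C" and z: "z \<in> X" and mn: "n \<le> m"
  shows "N ((bw_shift w ^^ m) z) \<le> C * N ((bw_shift w ^^ n) z)"
proof -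
  have "(bw_shift w ^^ m) z = (bw_shift w ^^ (m - n)) ((bw_shift w ^^ n) z)"
    using mn by (metis funpow_add le_add_diff_inverse2 o_apply)
  then show ?thesis using iter_bounded[OF bd conjunct1[OF iter_bounded[OF bd z]]] by simp
qed

lemma neg_pair:
  assumes bd: "\<forall>m n. norm (aw w m n) \<le> C" and x: "x \<in> X" and y: "y \<in> X"
  shows "\<not> li_yorke_pair N (bw_shift w) x y"
proof
  assume LY: "li_yorke_pair N (bw_shift w) x y"
  define z where "z = seq_diff x y"
  have z: "z \<in> X" unfolding z_def using diffX x y by blast
  define f where "f n = N ((bw_shift w ^^ n) z)" for n
  have C0: "0 \<le> C" using bd[rule_format, of 0 0] by simp
  have f0: "0 \<le> f n" for n unfolding f_def using N_nonneg iter_bounded[OF bd z] by blast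
  have li: "liminf (\<lambda>n. ereal (f n)) = 0" and ls: "limsup (\<lambda>n. ereal (f n)) > 0"
    using LY unfolding li_yorke_pair_def f_def z_def iter_diff[symmetric] by auto
  have "limsup (\<lambda>n. ereal (f n)) \<le> 0"
    unfolding Limsup_le_iff
  proof (intro allI impI)
    fix yy :: ereal assume yy: "0 < yy"
    show "\<forall>\<^sub>F n in sequentially. ereal (f n) < yy"
    proof (cases yy)
      case PInf then show ?thesis by simp
    next
      case MInf then show ?thesis using yy by simp
    next
      case (real r)
      then have r: "0 < r" using yy by simp
      define \<epsilon> where "\<epsilon> = r / (C + 1)"
      have eps: "0 < \<epsilon>" using r C0 by (simp add: \<epsilon>_def)
      have "\<exists>n0. f n0 < \<epsilon>"
      proof (rule ccontr)
        assume "\<not> ?thesis"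
        then have "ereal \<epsilon> \<le> liminf (\<lambda>n. ereal (f n))"
          by (intro Liminf_bounded) (auto simp: not_less)
        then show False using li eps by simp
      qed
      then obtain n0 where n0: "f n0 < \<epsilon>" by blast
      have "C * \<epsilon> < r" using r C0 by (simp add: \<epsilon>_def field_simps)
      moreover have "f m \<le> C * \<epsilon>" if "n0 \<le> m" for m
      proof -
        have "f m \<le> C * f n0" unfolding f_def by (rule mono_iter[OF bd z that])
        also have "\<dots> \<le> C * \<epsilon>" using n0 C0 by (intro mult_left_mono) auto
        finally show ?thesis .
      qed
      ultimately show ?thesis unfolding real eventually_sequentially
      proof (intro exI[of _ n0] allI impI)
        fix m assume "n0 \<le> m"
        then have "f m \<le> C * \<epsilon>" using \<open>\<And>m. n0 \<le> m \<Longrightarrow> f m \<le> C * \<epsilon>\<close> by blast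
        then show "ereal (f m) < ereal r" using \<open>C * \<epsilon> < r\<close> by simp
      qed
    qed
  qed
  then show False using ls by simp
qed

lemma neg_irr:
  assumes bd: "\<forall>m n. norm (aw w m n) \<le> C" and x: "x \<in> X"
  shows "\<not> irregular_vec N (bw_shift w) x"
proof
  assume "irregular_vec N (bw_shift w) x"
  then have ls: "limsup (\<lambda>n. ereal (N ((bw_shift w ^^ n) x))) = \<infinity>" by (simp add: irregular_vec_def)
  have "limsup (\<lambda>n. ereal (N ((bw_shift w ^^ n) x))) \<le> ereal (C * N x)"
    by (intro Limsup_bounded) (use iter_bounded[OF bd x] in simp)
  then show False using ls by simp
qed

lemma neg_unif:
  assumes bd: "\<forall>m n. norm (aw w m n) \<le> C"
  shows "\<not> uniformly_li_yorke_scrambled X N (bw_shift w) S"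
proof
  assume "uniformly_li_yorke_scrambled X N (bw_shift w) S"
  then have S: "S \<subseteq> X" and ex: "\<exists>x\<in>S. \<exists>y\<in>S. x \<noteq> y"
    and H0: "\<exists>pp qq :: nat \<Rightarrow> nat. \<forall>x\<in>S. \<forall>y\<in>S. x \<noteq> y \<longrightarrow>
        (\<lambda>n. N (seq_diff ((bw_shift w ^^ pp n) x) ((bw_shift w ^^ pp n) y))) \<longlonglongrightarrow> 0 \<and>
        filterlim (\<lambda>n. N (seq_diff ((bw_shift w ^^ qq n) x) ((bw_shift w ^^ qq n) y))) at_top sequentially"
    unfolding uniformly_li_yorke_scrambled_def by simp_all
  from ex obtain x y where xy: "x \<in> S" "y \<in> S" "x \<noteq> y" by blast
  from H0 obtain pp qq where H: "\<forall>x\<in>S. \<forall>y\<in>S. x \<noteq> y \<longrightarrow>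
        (\<lambda>n. N (seq_diff ((bw_shift w ^^ pp n) x) ((bw_shift w ^^ pp n) y))) \<longlonglongrightarrow> 0 \<and>
        filterlim (\<lambda>n. N (seq_diff ((bw_shift w ^^ qq n) x) ((bw_shift w ^^ qq n) y))) at_top sequentially" by blast
  have lim: "filterlim (\<lambda>n. N (seq_diff ((bw_shift w ^^ qq n) x) ((bw_shift w ^^ qq n) y))) at_top sequentially"
    using H xy by blast
  have z: "seq_diff x y \<in> X" using diffX S xy by blast
  have "\<forall>\<^sub>F n in sequentially. C * N (seq_diff x y) + 1 \<le> N (seq_diff ((bw_shift w ^^ qq n) x) ((bw_shift w ^^ qq n) y))"
    using lim unfolding filterlim_at_top by blast
  then obtain n where "C * N (seq_diff x y) + 1 \<le> N ((bw_shift w ^^ qq n) (seq_diff x y))"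
    unfolding eventually_sequentially iter_diff[symmetric] by blast
  then show False using iter_bounded[OF bd z, of "qq n"] by simp
qed

end




lemma P1_iff:
  fixes w :: "nat \<Rightarrow> 'a::real_normed_field"
  assumes K1: "1 \<le> K" and wK: "\<forall>j\<ge>1. norm (w j) \<le> K"
  shows "((SUP kn \<in> {(k, n). k \<ge> 1 \<and> n \<ge> 1}. ereal (\<Prod>j\<in>{fst kn + 1 .. snd kn + fst kn + 1}. norm (w j))) = \<infinity>)
     \<longleftrightarrow> (\<forall>B. \<exists>m n. B < norm (aw w m n))"
proof -
  have key: "(\<Prod>j\<in>{k + 1 .. n + k + 1}. norm (w j)) = norm (aw w (k - 1) (n + 1))" if "1 \<le> k" for k n :: nat
  proof -
    have "(k-1)+2 = k+1" "(k-1)+(n+1)+1 = n+k+1" using that by auto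
    then show ?thesis unfolding aw_def prod_norm[symmetric] by (simp add: add.commute)
  qed
  show ?thesis
    unfolding top_ereal_def[symmetric] SUP_eq_top_iff
  proof
    assume H: "\<forall>x<(top::ereal). \<exists>i\<in>{(k, n). 1 \<le> k \<and> 1 \<le> n}. x < ereal (\<Prod>j\<in>{fst i + 1..snd i + fst i + 1}. norm (w j))"
    show "\<forall>B. \<exists>m n. B < norm (aw w m n)"
    proof
      fix B :: real
      have tb: "ereal B < (top::ereal)" by (simp add: top_ereal_def)
      from H[rule_format, OF tb] obtain kn where kn: "kn \<in> {(k, n). 1 \<le> k \<and> 1 \<le> n}" "ereal B < ereal (\<Prod>j\<in>{fst kn + 1..snd kn + fst kn + 1}. norm (w j))"
        by blast
      then have "B < norm (aw w (fst kn - 1) (snd kn + 1))" using key[of "fst kn" "snd kn"] by auto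
      then show "\<exists>m n. B < norm (aw w m n)" by blast
    qed
  next
    assume U: "\<forall>B. \<exists>m n. B < norm (aw w m n)"
    show "\<forall>x<(top::ereal). \<exists>i\<in>{(k, n). 1 \<le> k \<and> 1 \<le> n}. x < ereal (\<Prod>j\<in>{fst i + 1..snd i + fst i + 1}. norm (w j))"
    proof (intro allI impI)
      fix x :: ereal assume x: "x < (top::ereal)"
      obtain r where r: "x \<le> ereal r"
        using x by (cases x) (auto simp: top_ereal_def)
      obtain m n where mn: "max r K < norm (aw w m n)" using U by blast
      have "n \<noteq> 0"
      proof
        assume "n = 0" then have "norm (aw w m n) = 1" by simp
        then show False using mn K1 by simp
      qed
      moreover have "n \<noteq> 1"
      proof
        assume "n = 1"
        then have "norm (aw w m n) = norm (w (m + 2))" by (simp add: aw_Suc[of w m 0, simplified])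
        moreover have "norm (w (m+2)) \<le> K" using wK by simp
        ultimately show False using mn by simp
      qed
      ultimately have "2 \<le> n" by linarith
      then obtain n' where n': "n = n' + 2" using le_Suc_ex[of 2 n] by (auto simp: add.commute)
      show "\<exists>i\<in>{(k, n). 1 \<le> k \<and> 1 \<le> n}. x < ereal (\<Prod>j\<in>{fst i + 1..snd i + fst i + 1}. norm (w j))"
      proof (intro bexI[of _ "(m+1, n'+1)"])
        have eqP: "(\<Prod>j\<in>{fst (m+1, n'+1) + 1..snd (m+1, n'+1) + fst (m+1, n'+1) + 1}. norm (w j)) = norm (aw w m n)"
          using key[of "m+1" "n'+1"] n' by simp
        show "x < ereal (\<Prod>j\<in>{fst (m+1, n'+1) + 1..snd (m+1, n'+1) + fst (m+1, n'+1) + 1}. norm (w j))"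
        proof -
          have "r < norm (aw w m n)" using mn by simp
          then have "ereal r < ereal (norm (aw w m n))" by simp
          then show ?thesis unfolding eqP by (rule order.strict_trans1[OF r])
        qed
      qed simp
    qed
  qed
qed


theorem corollary3p9:
  fixes w :: "nat \<Rightarrow> 'a::{real_normed_field, banach}"
    and X :: "(nat \<Rightarrow> 'a) set" and N :: "(nat \<Rightarrow> 'a) \<Rightarrow> real" and p :: real
  assumes space: "(1 \<le> p \<and> X = lp_seq p \<and> N = lp_norm p) \<or> (X = c0_seq \<and> N = c0_norm)"
    and w_nonzero: "\<forall>j\<ge>1. w j \<noteq> 0"
    and w_bounded: "\<exists>M. \<forall>j\<ge>1. norm (w j) \<le> M"
  shows "let T = bw_shift w;
             P1 = ((SUP kn \<in> {(k, n). k \<ge> 1 \<and> n \<ge> 1}.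
                      ereal (\<Prod>j\<in>{fst kn + 1 .. snd kn + fst kn + 1}. norm (w j))) = \<infinity>);
             P2 = (\<exists>x\<in>X. \<exists>y\<in>X. li_yorke_pair N T x y);
             P3 = li_yorke_chaotic X N T;
             P4 = dense_irregular_manifold X N T;
             P5 = densely_uniformly_li_yorke_chaotic X N T
         in (P1 \<longleftrightarrow> P2) \<and> (P1 \<longleftrightarrow> P3) \<and> (P1 \<longleftrightarrow> P4) \<and> (P1 \<longleftrightarrow> P5)"
proof -
  have Q: "qnorm X N"
  proof (cases "1 \<le> p \<and> X = lp_seq p \<and> N = lp_norm p")
    case True
    then have "X = lp_seq p" "N = lp_norm p" "1 \<le> p" by auto
    then show ?thesis using lp_qnorm[of p] by simp
  next
    case False
    then have "X = c0_seq" "N = c0_norm" using space by auto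
    then show ?thesis using c0_qnorm by simp
  qed
  interpret qnorm X N by (rule Q)
  obtain M0 where M0: "\<forall>j\<ge>1. norm (w j) \<le> M0" using w_bounded by blast
  define K where "K = max 1 M0"
  have K1: "1 \<le> K" unfolding K_def by simp
  have wK: "\<forall>j\<ge>1. norm (w j) \<le> K" using M0 unfolding K_def by (auto intro: le_max_iff_disj[THEN iffD2])
  note P1 = P1_iff[OF K1 wK]
  show ?thesis
  proof (cases "\<forall>B. \<exists>m n. B < norm (aw w m n)")
    case True
    have "constr X N w K" unfolding constr_def constr_axioms_def using Q K1 wK True by blast
    then interpret constr X N w K .
    have s1: "(SUP kn \<in> {(k, n). k \<ge> 1 \<and> n \<ge> 1}.
                      ereal (\<Prod>j\<in>{fst kn + 1 .. snd kn + fst kn + 1}. norm (w j))) = \<infinity>" using P1 True by blast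
    show ?thesis unfolding Let_def using s1 P2_true P3_true P4_true P5_true by simp
  next
    case False
    then obtain C where bd: "\<forall>m n. norm (aw w m n) \<le> C" by (auto simp: not_less)
    have n2: "\<not> (\<exists>x\<in>X. \<exists>y\<in>X. li_yorke_pair N (bw_shift w) x y)" using neg_pair[OF bd] by blast
    have n3: "\<not> li_yorke_chaotic X N (bw_shift w)"
    proof
      assume "li_yorke_chaotic X N (bw_shift w)"
      then obtain S where S: "S \<subseteq> X" "uncountable S" and LY: "\<forall>x\<in>S. \<forall>y\<in>S. x \<noteq> y \<longrightarrow> li_yorke_pair N (bw_shift w) x y"
        unfolding li_yorke_chaotic_def by blast
      have inf: "infinite S" using S(2) countable_finite by blast
      then obtain x where x: "x \<in> S" by (metis ex_in_conv finite.emptyI)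
      have "infinite (S - {x})" using inf by simp
      then obtain y where y: "y \<in> S - {x}" by (metis ex_in_conv finite.emptyI)
      then show False using LY x neg_pair[OF bd] S(1) by blast
    qed
    have n4: "\<not> dense_irregular_manifold X N (bw_shift w)"
    proof
      assume "dense_irregular_manifold X N (bw_shift w)"
      then obtain M where D: "dense_in_space X N M" and irr: "\<forall>x\<in>M. x \<noteq> (\<lambda>n. 0) \<longrightarrow> irregular_vec N (bw_shift w) x"
        unfolding dense_irregular_manifold_def by blast
      define e0 where "e0 = (\<lambda>i::nat. if i = 0 then 1 else 0 :: 'a)"
      have e0X: "e0 \<in> X" unfolding e0_def by (rule e0_in)
      have D1: "M \<subseteq> X" and D2: "\<forall>x\<in>X. \<forall>e>0. \<exists>d\<in>M. N (seq_diff x d) < e"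
        using D unfolding dense_in_space_def by auto
      have "\<exists>d\<in>M. N (seq_diff e0 d) < 1" using D2 e0X by simp
      then obtain d where d: "d \<in> M" "N (seq_diff e0 d) < 1" by blast
      have dX: "d \<in> X" using D1 d by blast
      have "d \<noteq> (\<lambda>n. 0)"
      proof
        assume "d = (\<lambda>n. 0)"
        then have "seq_diff e0 d = e0" by (simp add: seq_diff_def)
        moreover have "norm (e0 0) \<le> N e0" by (rule A1[OF e0X])
        ultimately show False using d by (simp add: e0_def)
      qed
      then show False using irr d neg_irr[OF bd dX] by blast
    qed
    have n5: "\<not> densely_uniformly_li_yorke_chaotic X N (bw_shift w)"
      unfolding densely_uniformly_li_yorke_chaotic_def using neg_unif[OF bd] by blast
    have s1: "\<not> ((SUP kn \<in> {(k, n). k \<ge> 1 \<and> n \<ge> 1}.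
                      ereal (\<Prod>j\<in>{fst kn + 1 .. snd kn + fst kn + 1}. norm (w j))) = \<infinity>)" using P1 False by blast
    show ?thesis unfolding Let_def using s1 n2 n3 n4 n5 by simp
  qed
qed

end
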